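(* Let $G$ be a finite nested group with chain of centers $G=X_0>X_1>\dots>X_n\ge1$. Then $X_i/[X_i,G]=Z(G/[X_i,G])$ for every $i=0,\dots,n$.
   Context: For $\chi\in\mathrm{Irr}(G)$, $Z(\chi)=\{g\in G: |\chi(g)|=\chi(1)\}$. $G$ is nested if for all $\chi,\psi\in\mathrm{Irr}(G)$ either $Z(\chi)\le Z(\psi)$ or $Z(\psi)\le Z(\chi)$; then the distinct subgroups $Z(\chi)$, $\chi\in\mathrm{Irr}(G)$, form a chain $G=X_0>X_1>\dots>X_n\ge1$, the chain of centers. *)

theory Defs
  imports "HOL-Algebra.Algebra" "Jordan_Normal_Form.Matrix"
begin

definition mat_trace :: "complex mat \<Rightarrow> complex" where
  "mat_trace A = (\<Sum>i<dim_row A. A $$ (i, i))"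

definition is_rep :: "('g, 'b) monoid_scheme \<Rightarrow> nat \<Rightarrow> ('g \<Rightarrow> complex mat) \<Rightarrow> bool" where
  "is_rep G d \<rho> \<longleftrightarrow>
     (\<forall>g\<in>carrier G. \<rho> g \<in> carrier_mat d d) \<and>
     \<rho> \<one>\<^bsub>G\<^esub> = 1\<^sub>m d \<and>
     (\<forall>g\<in>carrier G. \<forall>h\<in>carrier G. \<rho> (g \<otimes>\<^bsub>G\<^esub> h) = \<rho> g * \<rho> h)"

definition is_subspace :: "nat \<Rightarrow> complex vec set \<Rightarrow> bool" where
  "is_subspace d W \<longleftrightarrow> W \<subseteq> carrier_vec d \<and> 0\<^sub>v d \<in> W \<and>
     (\<forall>v\<in>W. \<forall>w\<in>W. v + w \<in> W) \<and> (\<forall>c. \<forall>v\<in>W. c \<cdot>\<^sub>v v \<in> W)"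

definition is_irr_rep :: "('g, 'b) monoid_scheme \<Rightarrow> nat \<Rightarrow> ('g \<Rightarrow> complex mat) \<Rightarrow> bool" where
  "is_irr_rep G d \<rho> \<longleftrightarrow> is_rep G d \<rho> \<and> d > 0 \<and>
     (\<forall>W. is_subspace d W \<and> (\<forall>g\<in>carrier G. \<forall>w\<in>W. \<rho> g *\<^sub>v w \<in> W)
          \<longrightarrow> W = {0\<^sub>v d} \<or> W = carrier_vec d)"

definition Irr :: "('g, 'b) monoid_scheme \<Rightarrow> ('g \<Rightarrow> complex) set" where
  "Irr G = {\<chi>. \<exists>d \<rho>. is_irr_rep G d \<rho> \<and> (\<forall>g\<in>carrier G. \<chi> g = mat_trace (\<rho> g))}"

definition char_center :: "('g, 'b) monoid_scheme \<Rightarrow> ('g \<Rightarrow> complex) \<Rightarrow> 'g set" where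
  "char_center G \<chi> = {g \<in> carrier G. complex_of_real (cmod (\<chi> g)) = \<chi> \<one>\<^bsub>G\<^esub>}"

definition nested :: "('g, 'b) monoid_scheme \<Rightarrow> bool" where
  "nested G \<longleftrightarrow> (\<forall>\<chi>\<in>Irr G. \<forall>\<psi>\<in>Irr G.
      char_center G \<chi> \<subseteq> char_center G \<psi> \<or> char_center G \<psi> \<subseteq> char_center G \<chi>)"

definition comm_subgroup :: "('g, 'b) monoid_scheme \<Rightarrow> 'g set \<Rightarrow> 'g set \<Rightarrow> 'g set" where
  "comm_subgroup G H K = generate G
     {h \<otimes>\<^bsub>G\<^esub> k \<otimes>\<^bsub>G\<^esub> inv\<^bsub>G\<^esub> h \<otimes>\<^bsub>G\<^esub> inv\<^bsub>G\<^esub> k | h k. h \<in> H \<and> k \<in> K}"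

definition group_center :: "('g, 'b) monoid_scheme \<Rightarrow> 'g set" where
  "group_center G = {z \<in> carrier G. \<forall>g\<in>carrier G. z \<otimes>\<^bsub>G\<^esub> g = g \<otimes>\<^bsub>G\<^esub> z}"

end

theory Submission
  imports Defs "Jordan_Normal_Form.Jordan_Normal_Form_Existence" "Jordan_Normal_Form.Spectral_Radius"
begin

lemma diag_block_one:
  assumes "Ball (set Bs) square_mat" "diag_block_mat Bs = 1\<^sub>m k" "B \<in> set Bs"
  shows "B = 1\<^sub>m (dim_row B)"
  using assms
proof (induct Bs arbitrary: k)
  case Nil then show ?case by simp
next
  case (Cons B' Bs)
  define D where "D = diag_block_mat Bs"
  have sqD: "square_mat D" unfolding D_def using Cons(2) diag_block_mat_square by auto
  have sqB: "dim_col B' = dim_row B'" using Cons(2) by auto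
  have eq: "four_block_mat B' (0\<^sub>m (dim_row B') (dim_col D)) (0\<^sub>m (dim_row D) (dim_col B')) D = 1\<^sub>m k"
    using Cons(3) unfolding D_def by (simp add: Let_def)
  have k: "k = dim_row B' + dim_row D" using arg_cong[OF eq, of dim_row] by simp
  have e: "\<And>i j. i < k \<Longrightarrow> j < k \<Longrightarrow> four_block_mat B' (0\<^sub>m (dim_row B') (dim_col D)) (0\<^sub>m (dim_row D) (dim_col B')) D $$ (i,j) = 1\<^sub>m k $$ (i,j)"
    using eq by simp
  have B1: "B' = 1\<^sub>m (dim_row B')"
  proof (rule eq_matI)
    fix i j assume "i < dim_row (1\<^sub>m (dim_row B') :: 'a mat)" "j < dim_col (1\<^sub>m (dim_row B') :: 'a mat)"
    then show "B' $$ (i, j) = 1\<^sub>m (dim_row B') $$ (i, j)"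
      using e[of i j] sqB sqD k by simp
  qed (use sqB in auto)
  have D1: "D = 1\<^sub>m (dim_row D)"
  proof (rule eq_matI)
    fix i j assume "i < dim_row (1\<^sub>m (dim_row D) :: 'a mat)" "j < dim_col (1\<^sub>m (dim_row D) :: 'a mat)"
    then show "D $$ (i, j) = 1\<^sub>m (dim_row D) $$ (i, j)"
      using e[of "i + dim_row B'" "j + dim_row B'"] sqB sqD k by simp
  qed (use sqD in auto)
  show ?case
  proof (cases "B = B'")
    case True then show ?thesis using B1 by simp
  next
    case False
    then have "B \<in> set Bs" using Cons(4) by simp
    then show ?thesis using Cons(1)[of "dim_row D"] Cons(2) D1 unfolding D_def by auto
  qed
qed

lemma diag_block_scalar:
  assumes "\<And>B. B \<in> set Bs \<Longrightarrow> B = c \<cdot>\<^sub>m 1\<^sub>m (dim_row B)"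
  shows "diag_block_mat Bs = (c :: complex) \<cdot>\<^sub>m 1\<^sub>m (sum_list (map dim_row Bs))"
  using assms
proof (induct Bs)
  case Nil then show ?case by (auto intro!: eq_matI)
next
  case (Cons B Bs)
  have IH: "diag_block_mat Bs = c \<cdot>\<^sub>m 1\<^sub>m (sum_list (map dim_row Bs))" using Cons by auto
  have B: "B = c \<cdot>\<^sub>m 1\<^sub>m (dim_row B)" using Cons by auto
  have sq: "dim_col B = dim_row B" using arg_cong[OF B, of dim_col] by simp
  show ?case
    using sq apply (simp add: Let_def IH)
    apply (subst B)
    apply (rule eq_matI)
      apply (auto simp: Let_def)
    done
qed

lemma sum_split_lessThan: "(\<Sum>i<a+(b::nat). f i) = (\<Sum>i<a. f i) + (\<Sum>i<b. f (a+i))"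
  by (induct b) (auto simp: add.assoc)

lemma mat_trace_diag_block:
  assumes "Ball (set Bs) square_mat"
  shows "mat_trace (diag_block_mat Bs) = (\<Sum>B\<leftarrow>Bs. mat_trace B)"
  using assms
proof (induct Bs)
  case Nil then show ?case by (simp add: mat_trace_def)
next
  case (Cons B Bs)
  define D where "D = diag_block_mat Bs"
  have sqD: "square_mat D" unfolding D_def using Cons(2) diag_block_mat_square by auto
  have sqB: "dim_col B = dim_row B" using Cons(2) by auto
  have IH: "mat_trace D = (\<Sum>B\<leftarrow>Bs. mat_trace B)" using Cons unfolding D_def by auto
  let ?F = "four_block_mat B (0\<^sub>m (dim_row B) (dim_col D)) (0\<^sub>m (dim_row D) (dim_col B)) D"
  have "mat_trace ?F = (\<Sum>i<dim_row B + dim_row D. ?F $$ (i,i))" unfolding mat_trace_def by simp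
  also have "\<dots> = (\<Sum>i<dim_row B. ?F $$ (i,i)) + (\<Sum>i<dim_row D. ?F $$ (dim_row B + i, dim_row B + i))"
    by (rule sum_split_lessThan)
  also have "\<dots> = mat_trace B + mat_trace D"
    unfolding mat_trace_def using sqB sqD by simp
  finally show ?case using IH unfolding D_def by (simp add: Let_def)
qed

lemma jb_pow_one:
  assumes n: "n > 0" and m: "m > 0" and eq: "jordan_block n (a::complex) ^\<^sub>m m = 1\<^sub>m n"
  shows "n = 1 \<and> a ^ m = 1"
proof -
  have e: "\<And>i j. i < n \<Longrightarrow> j < n \<Longrightarrow> (jordan_block n a ^\<^sub>m m) $$ (i,j) = (1\<^sub>m n :: complex mat) $$ (i,j)"
    using eq by simp
  have "(jordan_block n a ^\<^sub>m m) $$ (0,0) = a ^ m"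
    unfolding jordan_block_pow using n by simp
  hence am: "a ^ m = 1" using e[of 0 0] n by simp
  have "n = 1"
  proof (rule ccontr)
    assume "n \<noteq> 1"
    hence n1: "1 < n" using n by simp
    have "(jordan_block n a ^\<^sub>m m) $$ (0,1) = of_nat m * a ^ (m - 1)"
      unfolding jordan_block_pow using n1 by simp
    hence "of_nat m * a ^ (m - 1) = 0" using e[of 0 1] n1 by simp
    moreover have "a \<noteq> 0" using am m by (metis power_0_left zero_neq_one not_gr0)
    ultimately show False using m by simp
  qed
  with am show ?thesis by simp
qed

lemma mat_trace_comm:
  assumes M1: "M1 \<in> carrier_mat n k" and M2: "M2 \<in> carrier_mat k n"
  shows "mat_trace (M1 * M2) = mat_trace (M2 * M1)"
proof -
  have "mat_trace (M1 * M2) = (\<Sum>i<n. \<Sum>j<k. M1 $$ (i,j) * M2 $$ (j,i))"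
    unfolding mat_trace_def using M1 M2 by (simp add: scalar_prod_def lessThan_atLeast0)
  also have "\<dots> = (\<Sum>j<k. \<Sum>i<n. M2 $$ (j,i) * M1 $$ (i,j))"
    by (subst sum.swap) (simp add: mult.commute)
  also have "\<dots> = mat_trace (M2 * M1)"
    unfolding mat_trace_def using M1 M2 by (simp add: scalar_prod_def lessThan_atLeast0)
  finally show ?thesis .
qed

lemma sum_list_le_len: "(\<forall>x\<in>set xs. f x \<le> (1::real)) \<Longrightarrow> sum_list (map f xs) \<le> length xs"
  by (induct xs) auto

lemma sum_list_eq_len: "(\<forall>x\<in>set xs. f x \<le> (1::real)) \<Longrightarrow> sum_list (map f xs) = length xs \<Longrightarrow> x \<in> set xs \<Longrightarrow> f x = 1"
proof (induct xs)
  case Nil then show ?case by simp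
next
  case (Cons y ys)
  have le: "sum_list (map f ys) \<le> length ys" using Cons(2) sum_list_le_len[of ys f] by auto
  have fy: "f y \<le> 1" using Cons(2) by auto
  have "f y = 1" using Cons(3) le fy by simp
  moreover have "sum_list (map f ys) = length ys" using Cons(3) le fy by simp
  ultimately show ?case using Cons by auto
qed

lemma Re_sum_list: "Re (sum_list xs * c) = sum_list (map (\<lambda>a. Re (a * c)) xs)"
  by (induct xs) (auto simp: distrib_right)

lemma all_equal_unit:
  fixes xs :: "complex list"
  assumes u: "\<forall>a\<in>set xs. cmod a = 1" and s: "cmod (sum_list xs) = length xs" and a: "a \<in> set xs"
  shows "a = sum_list xs / of_nat (length xs)"
proof -
  define L where "L = length xs"
  define c where "c = sum_list xs / of_nat L"
  have L: "L > 0" using a unfolding L_def by (cases xs) auto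
  have cc: "cmod c = 1" unfolding c_def using s L unfolding L_def by (simp add: norm_divide)
  have le: "\<forall>x\<in>set xs. Re (x * cnj c) \<le> 1"
  proof
    fix x assume "x \<in> set xs"
    hence "cmod (x * cnj c) = 1" using u cc by (simp add: norm_mult)
    then show "Re (x * cnj c) \<le> 1" using complex_Re_le_cmod by (metis)
  qed
  have ccn: "c * cnj c = 1" using complex_norm_square[of c] cc by simp
  have "Re (sum_list xs * cnj c) = Re (of_nat L * c * cnj c)" unfolding c_def using L by simp
  also have "\<dots> = L" using ccn by (simp add: mult.assoc)
  finally have "sum_list (map (\<lambda>x. Re (x * cnj c)) xs) = length xs" unfolding Re_sum_list L_def .
  from sum_list_eq_len[OF le this a] have re: "Re (a * cnj c) = 1" .
  have na: "cmod (a * cnj c) = 1" using u a cc by (simp add: norm_mult)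
  have im: "Im (a * cnj c) = 0"
  proof -
    have "(cmod (a * cnj c))^2 = (Re (a * cnj c))^2 + (Im (a * cnj c))^2" by (rule cmod_power2)
    then show ?thesis using na re by simp
  qed
  have "a * cnj c = 1" using re im by (simp add: complex_eq_iff)
  hence "a * cnj c * c = c" by simp
  hence "a = c" using ccn by (simp add: mult.assoc mult.commute[of "cnj c"])
  then show ?thesis unfolding c_def L_def by simp
qed

lemma scalar_of_finite_order:
  fixes A :: "complex mat"
  assumes A: "A \<in> carrier_mat d d" and m: "m > 0" and pw: "A ^\<^sub>m m = 1\<^sub>m d"
    and tr: "cmod (mat_trace A) = d"
  shows "\<exists>c. A = c \<cdot>\<^sub>m 1\<^sub>m d"
proof -
  obtain as where "char_poly A = (\<Prod>a\<leftarrow>as. [:- a, 1:])" using char_poly_factorized[OF A] by blast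
  from jordan_nf_exists[OF A this] obtain n_as where jnf: "jordan_nf A n_as" by blast
  define J where "J = jordan_matrix n_as"
  from jnf have n0: "0 \<notin> fst ` set n_as" and "similar_mat A J" unfolding jordan_nf_def J_def by auto
  then obtain P Q where wit: "similar_mat_wit A J P Q" unfolding similar_mat_def by blast
  have dA: "dim_row A = d" using A by auto
  have PQ: "P \<in> carrier_mat d d" "Q \<in> carrier_mat d d" "J \<in> carrier_mat d d" "P * Q = 1\<^sub>m d" "Q * P = 1\<^sub>m d"
    "A = P * J * Q"
    using wit unfolding similar_mat_wit_def Let_def dA by auto
  have "J ^\<^sub>m m = Q * A ^\<^sub>m m * P" using similar_mat_wit_pow_id[OF similar_mat_wit_sym[OF wit]] .
  also have "\<dots> = 1\<^sub>m d" using pw PQ by simp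
  finally have Jm: "J ^\<^sub>m m = 1\<^sub>m d" .
  have dJ: "sum_list (map fst n_as) = d" using PQ(3) unfolding J_def by auto
  have blocks: "\<And>n a. (n,a) \<in> set n_as \<Longrightarrow> n = 1 \<and> a ^ m = 1"
  proof -
    fix n a assume na: "(n,a) \<in> set n_as"
    have sq: "Ball (set (map (\<lambda>(n,a). jordan_block n a ^\<^sub>m m) n_as)) square_mat" by auto
    have "diag_block_mat (map (\<lambda>(n,a). jordan_block n a ^\<^sub>m m) n_as) = 1\<^sub>m d"
      using Jm unfolding J_def jordan_matrix_pow .
    moreover have "jordan_block n a ^\<^sub>m m \<in> set (map (\<lambda>(n,a). jordan_block n a ^\<^sub>m m) n_as)"
      using na by force
    ultimately have "jordan_block n a ^\<^sub>m m = 1\<^sub>m (dim_row (jordan_block n a ^\<^sub>m m))"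
      by (rule diag_block_one[OF sq])
    hence "jordan_block n a ^\<^sub>m m = 1\<^sub>m n" by simp
    moreover have "n > 0" using n0 na by force
    ultimately show "n = 1 \<and> a ^ m = 1" using jb_pow_one m by blast
  qed
  have f1: "\<forall>x\<in>set n_as. fst x = 1" using blocks by auto
  have len: "d = length n_as" using dJ f1 by (induct n_as arbitrary: d) auto
  have trJ: "mat_trace J = sum_list (map snd n_as)"
  proof -
    have "mat_trace J = (\<Sum>B\<leftarrow>map (\<lambda>(n,a). jordan_block n a) n_as. mat_trace B)"
      unfolding J_def jordan_matrix_def by (rule mat_trace_diag_block) auto
    also have "\<dots> = sum_list (map snd n_as)"
      using f1 by (induct n_as) (auto simp: mat_trace_def)
    finally show ?thesis .
  qed
  have trA: "mat_trace A = mat_trace J"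
  proof -
    have "mat_trace A = mat_trace ((P * J) * Q)" using PQ by simp
    also have "\<dots> = mat_trace (Q * (P * J))" using PQ by (intro mat_trace_comm) auto
    also have "Q * (P * J) = J" using PQ by (metis assoc_mult_mat left_mult_one_mat)
    finally show ?thesis .
  qed
  have units: "\<forall>a\<in>set (map snd n_as). cmod a = 1"
  proof
    fix a assume "a \<in> set (map snd n_as)"
    then obtain n where "(n,a) \<in> set n_as" by auto
    hence "a ^ m = 1" using blocks by blast
    hence "cmod a ^ m = 1" by (metis norm_one norm_power)
    then show "cmod a = 1" using power_eq_imp_eq_base[of "cmod a" m 1] m by simp
  qed
  define c where "c = sum_list (map snd n_as) / of_nat (length (map snd n_as))"
  have allc: "\<And>n a. (n,a) \<in> set n_as \<Longrightarrow> a = c"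
  proof -
    fix n a assume "(n,a) \<in> set n_as"
    hence "a \<in> set (map snd n_as)" by force
    moreover have "cmod (sum_list (map snd n_as)) = length (map snd n_as)" using tr trA trJ len by simp
    ultimately show "a = c" unfolding c_def using all_equal_unit units by blast
  qed
  have "J = c \<cdot>\<^sub>m 1\<^sub>m (sum_list (map dim_row (map (\<lambda>(n,a). jordan_block n a) n_as)))"
    unfolding J_def jordan_matrix_def
  proof (rule diag_block_scalar)
    fix B assume "B \<in> set (map (\<lambda>(n,a). jordan_block n a) n_as)"
    then obtain n a where na: "(n,a) \<in> set n_as" and B: "B = jordan_block n a" by auto
    have "n = 1" "a = c" using blocks[OF na] allc[OF na] by auto
    then show "B = c \<cdot>\<^sub>m 1\<^sub>m (dim_row B)" unfolding B by (auto intro!: eq_matI)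
  qed
  also have "sum_list (map dim_row (map (\<lambda>(n,a). jordan_block n a) n_as)) = d"
    using dJ by (simp add: o_def case_prod_beta)
  finally have Jc: "J = c \<cdot>\<^sub>m 1\<^sub>m d" .
  have "A = P * (c \<cdot>\<^sub>m 1\<^sub>m d) * Q" using PQ Jc by simp
  also have "P * (c \<cdot>\<^sub>m 1\<^sub>m d) = c \<cdot>\<^sub>m P"
    using mult_smult_distrib[OF PQ(1) one_carrier_mat[of d], of c] PQ(1) by simp
  also have "(c \<cdot>\<^sub>m P) * Q = c \<cdot>\<^sub>m (P * Q)" using mult_smult_assoc_mat[OF PQ(1) PQ(2)] .
  also have "\<dots> = c \<cdot>\<^sub>m 1\<^sub>m d" using PQ by simp
  finally show ?thesis by blast
qed

lemma schur_scalar: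
  assumes irr: "is_irr_rep G d \<rho>" and M: "M \<in> carrier_mat d d"
    and comm: "\<And>g. g \<in> carrier G \<Longrightarrow> M * \<rho> g = \<rho> g * M"
  shows "\<exists>c. M = c \<cdot>\<^sub>m 1\<^sub>m d"
proof -
  have dpos: "d > 0" and rep: "is_rep G d \<rho>" using irr unfolding is_irr_rep_def by auto
  have carr: "\<And>g. g \<in> carrier G \<Longrightarrow> \<rho> g \<in> carrier_mat d d" using rep unfolding is_rep_def by auto
  from spectrum_non_empty[OF M dpos] obtain c where "c \<in> spectrum M" by blast
  then obtain v where ev: "eigenvector M v c" unfolding spectrum_def eigenvalue_def by auto
  have v: "v \<in> carrier_vec d" "v \<noteq> 0\<^sub>v d" "M *\<^sub>v v = c \<cdot>\<^sub>v v"
    using ev M unfolding eigenvector_def by auto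
  define W where "W = {w \<in> carrier_vec d. M *\<^sub>v w = c \<cdot>\<^sub>v w}"
  have sub: "is_subspace d W"
    unfolding is_subspace_def W_def
  proof (intro conjI ballI allI)
    fix w u assume w: "w \<in> {w \<in> carrier_vec d. M *\<^sub>v w = c \<cdot>\<^sub>v w}" and u: "u \<in> {w \<in> carrier_vec d. M *\<^sub>v w = c \<cdot>\<^sub>v w}"
    then show "w + u \<in> {w \<in> carrier_vec d. M *\<^sub>v w = c \<cdot>\<^sub>v w}"
      using M by (auto simp: mult_add_distrib_mat_vec smult_add_distrib_vec)
  next
    fix k w assume w: "w \<in> {w \<in> carrier_vec d. M *\<^sub>v w = c \<cdot>\<^sub>v w}"
    then show "k \<cdot>\<^sub>v w \<in> {w \<in> carrier_vec d. M *\<^sub>v w = c \<cdot>\<^sub>v w}"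
      using M by (auto simp: mult_mat_vec smult_smult_assoc mult.commute)
  qed (use M in auto)
  have inv: "\<forall>g\<in>carrier G. \<forall>w\<in>W. \<rho> g *\<^sub>v w \<in> W"
  proof (intro ballI)
    fix g w assume g: "g \<in> carrier G" and w: "w \<in> W"
    have "M *\<^sub>v (\<rho> g *\<^sub>v w) = (M * \<rho> g) *\<^sub>v w" using M carr[OF g] w unfolding W_def by auto
    also have "\<dots> = (\<rho> g * M) *\<^sub>v w" using comm[OF g] by simp
    also have "\<dots> = \<rho> g *\<^sub>v (M *\<^sub>v w)" using M carr[OF g] w unfolding W_def by auto
    also have "\<dots> = c \<cdot>\<^sub>v (\<rho> g *\<^sub>v w)" using w carr[OF g] unfolding W_def by (auto simp: mult_mat_vec)
    finally show "\<rho> g *\<^sub>v w \<in> W" using w carr[OF g] unfolding W_def by auto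
  qed
  have "W = {0\<^sub>v d} \<or> W = carrier_vec d" using irr sub inv unfolding is_irr_rep_def by blast
  moreover have "v \<in> W" using v unfolding W_def by auto
  ultimately have Wall: "W = carrier_vec d" using v by auto
  have "M = c \<cdot>\<^sub>m 1\<^sub>m d"
  proof (rule eq_matI)
    fix i j assume i: "i < dim_row (c \<cdot>\<^sub>m 1\<^sub>m d)" and j: "j < dim_col (c \<cdot>\<^sub>m 1\<^sub>m d)"
    have "unit_vec d j \<in> W" using Wall by simp
    hence "M *\<^sub>v unit_vec d j = c \<cdot>\<^sub>v unit_vec d j" unfolding W_def by simp
    hence "(M *\<^sub>v unit_vec d j) $ i = (c \<cdot>\<^sub>v unit_vec d j) $ i" by simp
    then show "M $$ (i, j) = (c \<cdot>\<^sub>m 1\<^sub>m d) $$ (i, j)" using i j M by auto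
  qed (use M in auto)
  then show ?thesis by blast
qed

lemma rep_inv:
  assumes "group G" "is_rep G d \<rho>" "x \<in> carrier G"
  shows "\<rho> (inv\<^bsub>G\<^esub> x) * \<rho> x = 1\<^sub>m d" "\<rho> x * \<rho> (inv\<^bsub>G\<^esub> x) = 1\<^sub>m d"
proof -
  interpret group G by fact
  show "\<rho> (inv\<^bsub>G\<^esub> x) * \<rho> x = 1\<^sub>m d" using assms unfolding is_rep_def
    by (metis inv_closed l_inv)
  show "\<rho> x * \<rho> (inv\<^bsub>G\<^esub> x) = 1\<^sub>m d" using assms unfolding is_rep_def
    by (metis inv_closed r_inv)
qed

lemma rep_pow:
  assumes "group G" "is_rep G d \<rho>" "x \<in> carrier G"
  shows "\<rho> (x [^]\<^bsub>G\<^esub> (n::nat)) = \<rho> x ^\<^sub>m n"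
proof -
  interpret group G by fact
  have dx: "dim_row (\<rho> x) = d" using assms unfolding is_rep_def by (meson carrier_matD(1))
  show ?thesis
  proof (induct n)
    case 0 then show ?case using assms dx unfolding is_rep_def by simp
  next
    case (Suc n)
    show ?case using assms Suc unfolding is_rep_def by simp
  qed
qed

lemma (in group) cancel_l1 [simp]: "a \<in> carrier G \<Longrightarrow> z \<in> carrier G \<Longrightarrow> inv a \<otimes> (a \<otimes> z) = z"
  by (simp add: m_assoc[symmetric])
lemma (in group) cancel_l2 [simp]: "a \<in> carrier G \<Longrightarrow> z \<in> carrier G \<Longrightarrow> a \<otimes> (inv a \<otimes> z) = z"
  by (simp add: m_assoc[symmetric])

lemma scal_comm: "(A :: complex mat) \<in> carrier_mat d d \<Longrightarrow> (c \<cdot>\<^sub>m 1\<^sub>m d) * A = A * (c \<cdot>\<^sub>m 1\<^sub>m d)"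
proof -
  assume A: "A \<in> carrier_mat d d"
  have "(c \<cdot>\<^sub>m 1\<^sub>m d) * A = c \<cdot>\<^sub>m (1\<^sub>m d * A)" using A by (rule_tac mult_smult_assoc_mat) auto
  also have "\<dots> = c \<cdot>\<^sub>m (A * 1\<^sub>m d)" using A by simp
  also have "\<dots> = A * (c \<cdot>\<^sub>m 1\<^sub>m d)" using A by (rule_tac mult_smult_distrib[symmetric]) auto
  finally show ?thesis .
qed

lemma mat_trace_one: "mat_trace (1\<^sub>m d) = of_nat d"
  unfolding mat_trace_def by simp

lemma mat_trace_smult_one: "mat_trace (c \<cdot>\<^sub>m 1\<^sub>m d) = c * of_nat d"
  unfolding mat_trace_def by simp

lemma smult_one_pow: "(c \<cdot>\<^sub>m 1\<^sub>m d) ^\<^sub>m n = (c ^ n) \<cdot>\<^sub>m (1\<^sub>m d :: complex mat)"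
proof (induct n)
  case 0 then show ?case by (rule eq_matI) auto
next
  case (Suc n) then show ?case by (rule_tac eq_matI) (auto simp: mult_smult_distrib)
qed

theorem lemma2p5:
  fixes G :: "('g, 'b) monoid_scheme" (structure)
  assumes "group G" and "finite (carrier G)" and "nested G"
    and "\<chi> \<in> Irr G"
  defines "Y \<equiv> char_center G \<chi>"
  defines "N \<equiv> comm_subgroup G Y (carrier G)"
  shows "(\<lambda>x. N #>\<^bsub>G\<^esub> x) ` Y = group_center (G Mod N)"
proof -
  interpret group G by fact
  from assms(4) obtain d \<rho> where irr: "is_irr_rep G d \<rho>"
    and chi: "\<And>g. g \<in> carrier G \<Longrightarrow> \<chi> g = mat_trace (\<rho> g)"
    unfolding Irr_def by blast
  have rep: "is_rep G d \<rho>" and dpos: "d > 0" using irr unfolding is_irr_rep_def by auto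
  have carr: "\<And>g. g \<in> carrier G \<Longrightarrow> \<rho> g \<in> carrier_mat d d" using rep unfolding is_rep_def by auto
  have rho1: "\<rho> \<one> = 1\<^sub>m d" using rep unfolding is_rep_def by auto
  have rhom: "\<And>g h. g \<in> carrier G \<Longrightarrow> h \<in> carrier G \<Longrightarrow> \<rho> (g \<otimes> h) = \<rho> g * \<rho> h"
    using rep unfolding is_rep_def by auto
  have chi1: "\<chi> \<one> = of_nat d" using chi[of \<one>] rho1 mat_trace_one by simp
  have Ysub: "Y \<subseteq> carrier G" unfolding Y_def char_center_def by auto
  define S where "S = {h \<otimes> k \<otimes> inv h \<otimes> inv k | h k. h \<in> Y \<and> k \<in> carrier G}"
  have N_def': "N = generate G S" unfolding N_def comm_subgroup_def S_def by simp
  have Ssub: "S \<subseteq> carrier G" unfolding S_def using Ysub by auto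
  have Nsg: "subgroup N G" unfolding N_def' by (rule generate_is_subgroup[OF Ssub])
  have Nsub: "N \<subseteq> carrier G" using Nsg subgroup.subset by blast
  have gen: "\<And>y k. y \<in> Y \<Longrightarrow> k \<in> carrier G \<Longrightarrow> y \<otimes> k \<otimes> inv (k \<otimes> y) \<in> N"
  proof -
    fix y k assume y: "y \<in> Y" and k: "k \<in> carrier G"
    have "y \<otimes> k \<otimes> inv (k \<otimes> y) = y \<otimes> k \<otimes> inv y \<otimes> inv k"
      using y k Ysub by (auto simp: inv_mult_group m_assoc)
    also have "\<dots> \<in> N" unfolding N_def' using y k by (intro generate.incl) (auto simp: S_def)
    finally show "y \<otimes> k \<otimes> inv (k \<otimes> y) \<in> N" .
  qed
  have Nnorm: "N \<lhd> G"
    unfolding normal_inv_iff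
  proof (intro conjI Nsg ballI)
    fix x h assume x: "x \<in> carrier G" and h: "h \<in> N"
    have conjS: "\<And>s. s \<in> S \<Longrightarrow> x \<otimes> s \<otimes> inv x \<in> generate G S"
    proof -
      fix s assume "s \<in> S"
      then obtain y k where s: "s = y \<otimes> k \<otimes> inv y \<otimes> inv k" and y: "y \<in> Y" and k: "k \<in> carrier G"
        unfolding S_def by blast
      have yc: "y \<in> carrier G" using y Ysub by auto
      have "x \<otimes> s \<otimes> inv x = inv (y \<otimes> x \<otimes> inv y \<otimes> inv x) \<otimes> (y \<otimes> (x \<otimes> k) \<otimes> inv y \<otimes> inv (x \<otimes> k))"
        using x k yc by (simp add: s inv_mult_group m_assoc)
      also have "\<dots> \<in> generate G S"
        using x k y by (intro generate.eng generate.inv generate.incl) (auto simp: S_def)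
      finally show "x \<otimes> s \<otimes> inv x \<in> generate G S" .
    qed
    from h show "x \<otimes> h \<otimes> inv x \<in> N" unfolding N_def'
    proof (induct h rule: generate.induct)
      case one then show ?case using x generate.one by auto
    next
      case (incl s) then show ?case by (rule conjS)
    next
      case (inv s)
      have sc: "s \<in> carrier G" using inv Ssub by auto
      have "x \<otimes> inv s \<otimes> inv x = inv (x \<otimes> s \<otimes> inv x)"
        using x sc by (simp add: inv_mult_group m_assoc)
      also have "\<dots> \<in> generate G S"
        using subgroup.m_inv_closed[OF Nsg] conjS[OF inv] unfolding N_def' by blast
      finally show ?case .
    next
      case (eng a b)
      have ac: "a \<in> carrier G" "b \<in> carrier G" using eng generate_in_carrier[OF Ssub] by auto
      have "x \<otimes> (a \<otimes> b) \<otimes> inv x = (x \<otimes> a \<otimes> inv x) \<otimes> (x \<otimes> b \<otimes> inv x)"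
        using x ac by (simp add: m_assoc)
      also have "\<dots> \<in> generate G S" by (rule generate.eng[OF eng(2) eng(4)])
      finally show ?case .
    qed
  qed
  define m where "m = Coset.order G"
  have m: "m > 0" unfolding m_def using assms(2) order_gt_0_iff_finite by blast
  have rhopow: "\<And>g. g \<in> carrier G \<Longrightarrow> \<rho> g ^\<^sub>m m = 1\<^sub>m d"
    using rep_pow[OF assms(1) rep] pow_order_eq_1 rho1 unfolding m_def by metis
  have Yscal: "\<And>y. y \<in> Y \<Longrightarrow> \<exists>c. \<rho> y = c \<cdot>\<^sub>m 1\<^sub>m d"
  proof -
    fix y assume y: "y \<in> Y"
    have yc: "y \<in> carrier G" using y Ysub by auto
    from y have "complex_of_real (cmod (\<chi> y)) = of_nat d" unfolding Y_def char_center_def chi1 by auto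
    hence "cmod (mat_trace (\<rho> y)) = d" using chi[OF yc] by (metis of_real_eq_iff of_real_of_nat_eq)
    then show "\<exists>c. \<rho> y = c \<cdot>\<^sub>m 1\<^sub>m d"
      using scalar_of_finite_order[OF carr[OF yc] m rhopow[OF yc]] by blast
  qed
  have rhoS: "\<And>s. s \<in> S \<Longrightarrow> \<rho> s = 1\<^sub>m d"
  proof -
    fix s assume "s \<in> S"
    then obtain y k where s: "s = y \<otimes> k \<otimes> inv y \<otimes> inv k" and y: "y \<in> Y" and k: "k \<in> carrier G"
      unfolding S_def by blast
    have yc: "y \<in> carrier G" using y Ysub by auto
    obtain c where c: "\<rho> y = c \<cdot>\<^sub>m 1\<^sub>m d" using Yscal[OF y] by blast
    have eq: "\<rho> (y \<otimes> k) = \<rho> (k \<otimes> y)"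
      using scal_comm[OF carr[OF k]] by (simp add: rhom yc k c)
    have "s = (y \<otimes> k) \<otimes> inv (k \<otimes> y)" using yc k by (simp add: s inv_mult_group m_assoc)
    hence "\<rho> s = \<rho> (k \<otimes> y) * \<rho> (inv (k \<otimes> y))" using yc k eq by (simp add: rhom)
    also have "\<dots> = 1\<^sub>m d" using rep_inv[OF assms(1) rep] yc k by simp
    finally show "\<rho> s = 1\<^sub>m d" .
  qed
  have NK: "\<And>x. x \<in> N \<Longrightarrow> \<rho> x = 1\<^sub>m d"
  proof -
    fix x assume "x \<in> N"
    then show "\<rho> x = 1\<^sub>m d" unfolding N_def'
    proof (induct x rule: generate.induct)
      case one then show ?case by (rule rho1)
    next
      case (incl s) then show ?case by (rule rhoS)
    next
      case (inv s)
      have sc: "s \<in> carrier G" using inv Ssub by auto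
      have "\<rho> (inv s) = \<rho> (inv s) * 1\<^sub>m d" using carr[of "inv s"] sc by simp
      also have "\<dots> = \<rho> (inv s) * \<rho> s" using rhoS[OF inv] by simp
      also have "\<dots> = 1\<^sub>m d" using rep_inv[OF assms(1) rep sc] by simp
      finally show ?case .
    next
      case (eng a b)
      have ac: "a \<in> carrier G" "b \<in> carrier G" using eng generate_in_carrier[OF Ssub] by auto
      show ?case using eng ac by (simp add: rhom)
    qed
  qed
  have cosmul: "\<And>a b. a \<in> carrier G \<Longrightarrow> b \<in> carrier G \<Longrightarrow> (N #> a) \<otimes>\<^bsub>G Mod N\<^esub> (N #> b) = N #> (a \<otimes> b)"
    using normal.rcos_sum[OF Nnorm] by (simp add: FactGroup_def)
  have carMod: "carrier (G Mod N) = rcosets N" by (simp add: FactGroup_def)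
  show ?thesis
  proof
    show "(\<lambda>x. N #> x) ` Y \<subseteq> group_center (G Mod N)"
    proof
      fix z assume "z \<in> (\<lambda>x. N #> x) ` Y"
      then obtain y where y: "y \<in> Y" and z: "z = N #> y" by blast
      have yc: "y \<in> carrier G" using y Ysub by auto
      have "z \<in> carrier (G Mod N)" using z yc carMod rcosetsI[OF Nsub] by simp
      moreover have "\<forall>w\<in>carrier (G Mod N). z \<otimes>\<^bsub>G Mod N\<^esub> w = w \<otimes>\<^bsub>G Mod N\<^esub> z"
      proof
        fix w assume "w \<in> carrier (G Mod N)"
        then obtain g where g: "g \<in> carrier G" and w: "w = N #> g"
          unfolding carMod RCOSETS_def by blast
        have "y \<otimes> g \<in> N #> (g \<otimes> y)"
          using subgroup.rcos_module_rev[OF Nsg assms(1), of "g \<otimes> y" "y \<otimes> g"] gen[OF y g] yc g by simp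
        hence "N #> (g \<otimes> y) = N #> (y \<otimes> g)" using repr_independence Nsg yc g by simp
        then show "z \<otimes>\<^bsub>G Mod N\<^esub> w = w \<otimes>\<^bsub>G Mod N\<^esub> z" using cosmul yc g z w by simp
      qed
      ultimately show "z \<in> group_center (G Mod N)" unfolding group_center_def by blast
    qed
  next
    show "group_center (G Mod N) \<subseteq> (\<lambda>x. N #> x) ` Y"
    proof
      fix z assume zc: "z \<in> group_center (G Mod N)"
      then obtain g where g: "g \<in> carrier G" and z: "z = N #> g"
        unfolding group_center_def carMod RCOSETS_def by blast
      have comm: "\<And>h. h \<in> carrier G \<Longrightarrow> \<rho> g * \<rho> h = \<rho> h * \<rho> g"
      proof -
        fix h assume h: "h \<in> carrier G"
        have "N #> h \<in> carrier (G Mod N)" using carMod rcosetsI[OF Nsub h] by simp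
        hence "z \<otimes>\<^bsub>G Mod N\<^esub> (N #> h) = (N #> h) \<otimes>\<^bsub>G Mod N\<^esub> z"
          using zc unfolding group_center_def by blast
        hence "N #> (g \<otimes> h) = N #> (h \<otimes> g)" using cosmul g h z by simp
        moreover have "g \<otimes> h \<in> N #> (g \<otimes> h)" using rcos_self[OF _ Nsg] g h by simp
        ultimately have "g \<otimes> h \<in> N #> (h \<otimes> g)" by simp
        hence inN: "(g \<otimes> h) \<otimes> inv (h \<otimes> g) \<in> N"
          using subgroup.rcos_module_imp[OF Nsg assms(1)] g h by simp
        have k1: "\<rho> (g \<otimes> h) * \<rho> (inv (h \<otimes> g)) = 1\<^sub>m d" using NK[OF inN] rhom[of "g \<otimes> h" "inv (h \<otimes> g)"] g h by simp
        have "\<rho> (g \<otimes> h) = \<rho> (g \<otimes> h) * (\<rho> (inv (h \<otimes> g)) * \<rho> (h \<otimes> g))"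
          using rep_inv[OF assms(1) rep, of "h \<otimes> g"] carr[of "g \<otimes> h"] g h by simp
        also have "\<dots> = (\<rho> (g \<otimes> h) * \<rho> (inv (h \<otimes> g))) * \<rho> (h \<otimes> g)"
          using carr g h by (simp add: assoc_mult_mat[of _ d d _ d _ d])
        also have "\<dots> = \<rho> (h \<otimes> g)" using k1 carr[of "h \<otimes> g"] g h by simp
        finally show "\<rho> g * \<rho> h = \<rho> h * \<rho> g" using g h by (simp add: rhom)
      qed
      obtain c where c: "\<rho> g = c \<cdot>\<^sub>m 1\<^sub>m d"
        using schur_scalar[OF irr carr[OF g]] comm by metis
      have "(c ^ m) \<cdot>\<^sub>m (1\<^sub>m d :: complex mat) = 1\<^sub>m d" using rhopow[OF g] c smult_one_pow by simp
      hence "c ^ m = 1" using dpos by (metis index_one_mat(1) index_smult_mat(1) dim_row_mat(1) mult.right_neutral index_one_mat(2) index_one_mat(3))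
      hence "cmod c = 1"
        by (metis m norm_ge_zero norm_one norm_power power_eq_1_iff not_gr0)
      hence "cmod (\<chi> g) = d" using chi[OF g] c mat_trace_smult_one by (simp add: norm_mult)
      hence "g \<in> Y" unfolding Y_def char_center_def using g chi1 by simp
      then show "z \<in> (\<lambda>x. N #> x) ` Y" using z by blast
    qed
  qed
qed

end
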